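(* For all integers $a,b\ge 0$, $\ell_{\rm leaf}(a,0)\,\ell_{\rm leaf}(0,b)\ge\ell_{\rm leaf}(a,b)$.
   Context: Fix $\rho^1,\rho^0>0$ and let $B$ denote the Beta function. Define $\ell_{\rm leaf}(c^1,c^0)=\dfrac{B(c^1+\rho^1,\,c^0+\rho^0)}{B(\rho^1,\rho^0)}$ for integers $c^1,c^0\ge0$. *)

theory Defs
  imports "HOL-Analysis.Analysis"
begin

definition l_leaf :: "real \<Rightarrow> real \<Rightarrow> nat \<Rightarrow> nat \<Rightarrow> real" where
  "l_leaf \<rho>1 \<rho>0 c1 c0 = Beta (real c1 + \<rho>1) (real c0 + \<rho>0) / Beta \<rho>1 \<rho>0"

end

theory Submission
  imports Defs
begin

lemma poch_mono_real:
  fixes x y :: real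
  assumes "0 < x" "x \<le> y"
  shows "pochhammer x n \<le> pochhammer y n"
proof (induction n)
  case 0 then show ?case by simp
next
  case (Suc n)
  have "pochhammer x n * (x + real n) \<le> pochhammer y n * (y + real n)"
    using Suc assms by (intro mult_mono) (auto intro: pochhammer_nonneg)
  then show ?case by (simp add: pochhammer_Suc)
qed

lemma Gamma_shift:
  fixes x :: real
  assumes "0 < x"
  shows "Gamma (x + real n) = pochhammer x n * Gamma x"
proof -
  have "x \<notin> \<int>\<^sub>\<le>\<^sub>0" using assms by (auto elim!: nonpos_Ints_cases)
  moreover have "Gamma x \<noteq> 0" using Gamma_real_pos[OF assms] by linarith
  ultimately show ?thesis using pochhammer_Gamma[of x n] by simp
qed

lemma Beta_shift:
  fixes x y :: real
  assumes "0 < x" "0 < y"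
  shows "Beta (real n + x) (real m + y) =
     pochhammer x n * pochhammer y m / pochhammer (x + y) (n + m) * Beta x y"
proof -
  have g: "Gamma (x + y + real (n + m)) = pochhammer (x+y) (n+m) * Gamma (x + y)"
    using assms by (intro Gamma_shift) simp
  have p: "pochhammer (x+y) (n+m) > 0" using assms by (intro pochhammer_pos) simp
  have gp: "Gamma (x+y) > 0" using assms by (intro Gamma_real_pos) simp
  have "real n + x + (real m + y) = x + y + real (n + m)" by simp
  then show ?thesis
    unfolding Beta_def using Gamma_shift[OF assms(1), of n] Gamma_shift[OF assms(2), of m] g p gp
    by (simp add: add.commute field_simps)
qed

theorem lemma13:
  fixes \<rho>1 \<rho>0 :: real and a b :: nat
  assumes "\<rho>1 > 0" and "\<rho>0 > 0"
  shows "l_leaf \<rho>1 \<rho>0 a 0 * l_leaf \<rho>1 \<rho>0 0 b \<ge> l_leaf \<rho>1 \<rho>0 a b"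
proof -
  let ?s = "\<rho>1 + \<rho>0"
  have B: "Beta \<rho>1 \<rho>0 > 0" unfolding Beta_def using assms
    by (intro divide_pos_pos mult_pos_pos Gamma_real_pos) auto
  have l: "l_leaf \<rho>1 \<rho>0 c1 c0 = pochhammer \<rho>1 c1 * pochhammer \<rho>0 c0 / pochhammer ?s (c1 + c0)" for c1 c0
    unfolding l_leaf_def using Beta_shift[OF assms, of c1 c0] B by simp
  have s: "?s > 0" using assms by simp
  have pa: "pochhammer ?s a > 0" "pochhammer ?s b > 0" "pochhammer ?s (a+b) > 0"
    using s by (auto intro: pochhammer_pos)
  have n1: "pochhammer \<rho>1 a \<ge> 0" "pochhammer \<rho>0 b \<ge> 0" using assms by (auto intro: pochhammer_nonneg)
  have "pochhammer ?s (a+b) = pochhammer ?s a * pochhammer (?s + real a) b"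
    by (rule pochhammer_product')
  also have "\<dots> \<ge> pochhammer ?s a * pochhammer ?s b"
    using pa s by (intro mult_left_mono poch_mono_real) auto
  finally have key: "pochhammer ?s a * pochhammer ?s b \<le> pochhammer ?s (a+b)" .
  have "pochhammer \<rho>1 a * pochhammer \<rho>0 b / pochhammer ?s (a + b)
        \<le> pochhammer \<rho>1 a * pochhammer \<rho>0 b / (pochhammer ?s a * pochhammer ?s b)"
    using key pa n1 by (intro divide_left_mono mult_nonneg_nonneg mult_pos_pos) auto
  then show ?thesis unfolding l by simp
qed

end
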